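(* Let \(\mathbf{m}_i =\left(\langle x_0^{(k)}\, x_1^{(\ell)}\rangle_i\;|\;(k,\ell) \in \mathcal{E}\right)\) be a message encoding vector with unnormalized associated message encoding state \[\sigma_{\mathbf{m}_i}=\sum_{k<\ell}|B_{\langle x_0^{(k)} x_1^{(\ell)}\rangle_i}\rangle\langle B_{\langle x_0^{(k)} x_1^{(\ell)}\rangle_i}|_{k,\ell}\otimes \mathds{1}_{[N]\backslash {\{k,\ell\}}}.\] Then the largest eigenvalue satisfies \[\lambda_{\textup{max}}(\sigma_{\mathbf{m}_{i}})\leq \frac{N^2}{4} +\frac{N}{4}-\frac{1}{2}.\]
   Context: Consider an \(N\)-qubit register with sites indexed by \([N]=\{1,\dots,N\}\). The index-encoding set is \(\mathcal{E}=\{(k,\ell): k,\ell\in[N],\ k<\ell\}\), so \(|\mathcal{E}|=N(N-1)/2\). Messages are \(x=x_0x_1\in X=\{00,01,10,11\}\). A message encoding vector \(\mathbf{m}_i\in X^{\mathcal{E}}\) assigns to each pair \((k,\ell)\in\mathcal{E}\) a two-bit message, denoted \(\langle x_0^{(k)} x_1^{(\ell)}\rangle_i\). The two-qubit Bell states are \(|B_{xy}\rangle=\frac{1}{\sqrt{2}}(|0y\rangle+(-1)^x|1\bar y\rangle)\) for \(x,y\in\{0,1\}\), with \(\bar y\) the negation of \(y\). In the sum, \(|B\rangle\langle B|_{k,\ell}\) acts on qubits \(k\) and \(\ell\), and \(\mathds{1}_{[N]\backslash\{k,\ell\}}\) is the identity on all remaining qubits of the register. *)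

theory Defs
  imports Complex_Main "Jordan_Normal_Form.Char_Poly"
begin

text \<open>Computational basis of the N-qubit register: basis index a < 2^N; the value of
qubit j (j in {1..N}) in basis state a is bit (j-1) of a.\<close>

definition qubit :: "nat \<Rightarrow> nat \<Rightarrow> bool" where
  "qubit a j = bit a (j - 1)"

definition enc_set :: "nat \<Rightarrow> (nat \<times> nat) set" where
  "enc_set N = {(k, l). 1 \<le> k \<and> k < l \<and> l \<le> N}"

text \<open>Amplitude of the Bell state |B_xy> = (|0 y> + (-1)^x |1 (not y)>)/sqrt 2
  at the two-qubit basis state |u v>.\<close>
definition bell_amp :: "bool \<Rightarrow> bool \<Rightarrow> bool \<Rightarrow> bool \<Rightarrow> complex" where
  "bell_amp x y u v =
     (if \<not> u \<and> v = y then 1 / of_real (sqrt 2)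
      else if u \<and> v = (\<not> y) then (if x then -1 else 1) / of_real (sqrt 2)
      else 0)"

text \<open>Matrix entry (a,b) of |B_xy><B_xy|_{k,l} \<otimes> 1_{[N]\{k,l}}.\<close>
definition bell_proj_entry :: "nat \<Rightarrow> nat \<Rightarrow> nat \<Rightarrow> bool \<times> bool \<Rightarrow> nat \<Rightarrow> nat \<Rightarrow> complex" where
  "bell_proj_entry N k l xy a b =
     (if (\<forall>j \<in> {1..N} - {k, l}. qubit a j = qubit b j)
      then bell_amp (fst xy) (snd xy) (qubit a k) (qubit a l)
           * cnj (bell_amp (fst xy) (snd xy) (qubit b k) (qubit b l))
      else 0)"

text \<open>Unnormalized message encoding state sigma_m for a message encoding vector
  m : E -> {00,01,10,11}, message x0x1 encoded as the pair (x0,x1) of booleans.\<close>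
definition sigma_m :: "nat \<Rightarrow> (nat \<times> nat \<Rightarrow> bool \<times> bool) \<Rightarrow> complex mat" where
  "sigma_m N m = mat (2 ^ N) (2 ^ N)
     (\<lambda>(a, b). \<Sum>(k, l) \<in> enc_set N. bell_proj_entry N k l (m (k, l)) a b)"

text \<open>Largest eigenvalue of a (Hermitian) matrix: its eigenvalues are real.\<close>
definition lambda_max :: "complex mat \<Rightarrow> real" where
  "lambda_max A = Max (Re ` {ev. eigenvalue A ev})"

end

theory Submission
  imports Defs "Jordan_Normal_Form.Spectral_Radius"
begin
lemma lt_pow_bit: "(a::nat) < 2^N \<longleftrightarrow> (\<forall>i. bit a i \<longrightarrow> i < N)"
proof -
  have "a < 2^N \<longleftrightarrow> take_bit N a = a" by (simp add: take_bit_nat_eq_self_iff)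
  also have "\<dots> \<longleftrightarrow> (\<forall>i. bit a i \<longrightarrow> i < N)"
    by (auto simp: bit_eq_iff[of "take_bit N a" a] bit_take_bit_iff)
  finally show ?thesis .
qed

lemma bits_eq: assumes "(a::nat) < 2^N" "b < 2^N" "\<forall>j\<in>{1..N}. qubit a j = qubit b j"
  shows "a = b"
proof (subst bit_eq_iff, intro allI impI)
  fix n assume "possible_bit TYPE(nat) n"
  show "bit a n = bit b n"
  proof (cases "n < N")
    case True
    then have "Suc n \<in> {1..N}" by auto
    then show ?thesis using assms(3) unfolding qubit_def by fastforce
  next
    case False then show ?thesis using assms(1,2) lt_pow_bit by blast
  qed
qed

definition fl :: "nat \<Rightarrow> nat \<Rightarrow> nat \<Rightarrow> nat" where
  "fl k l a = flip_bit (k-1) (flip_bit (l-1) a)"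

lemma qubit_fl: assumes "k \<ge> 1" "l \<ge> 1" "k \<noteq> l" "j \<ge> 1"
  shows "qubit (fl k l a) j = (if j = k \<or> j = l then \<not> qubit a j else qubit a j)"
  using assms unfolding qubit_def fl_def by (auto simp: bit_flip_bit_iff)

lemma fl_lt: assumes "a < 2^N" "k \<in> {1..N}" "l \<in> {1..N}" shows "fl k l a < (2::nat)^N"
  using assms unfolding fl_def lt_pow_bit by (auto simp: bit_flip_bit_iff)

lemma fl_fl: assumes "k \<noteq> l" shows "fl k l (fl k l a) = a"
  unfolding fl_def by (rule bit_eqI) (auto simp: bit_flip_bit_iff)

lemma fl_neq: assumes "k \<ge> 1" "l \<ge> 1" "k \<noteq> l" shows "fl k l a \<noteq> a"
proof
  assume "fl k l a = a"
  then have "qubit (fl k l a) k = qubit a k" by simp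
  then show False using qubit_fl[OF assms \<open>k\<ge>1\<close>] by simp
qed
definition Y :: "(nat \<times> nat \<Rightarrow> bool \<times> bool) \<Rightarrow> nat \<Rightarrow> nat \<Rightarrow> bool" where
  "Y m k j = snd (m (min k j, max k j))"
definition mt :: "(nat \<times> nat \<Rightarrow> bool \<times> bool) \<Rightarrow> nat \<Rightarrow> nat \<Rightarrow> nat \<Rightarrow> bool" where
  "mt m a k j = (qubit a j = (qubit a k \<noteq> Y m k j))"
definition dg :: "nat \<Rightarrow> (nat \<times> nat \<Rightarrow> bool \<times> bool) \<Rightarrow> nat \<Rightarrow> nat \<Rightarrow> nat" where
  "dg N m a k = card {j \<in> {1..N} - {k}. mt m a k j}"
definition Q :: "(nat \<times> nat \<Rightarrow> bool \<times> bool) \<Rightarrow> nat \<Rightarrow> nat \<Rightarrow> nat \<Rightarrow> nat \<Rightarrow> real" where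
  "Q m k l a b = (if mt m a k l \<and> (b = a \<or> b = fl k l a) then 1/2 else 0)"
definition R :: "nat \<Rightarrow> (nat \<times> nat \<Rightarrow> bool \<times> bool) \<Rightarrow> nat \<Rightarrow> nat \<Rightarrow> nat \<Rightarrow> nat \<Rightarrow> real" where
  "R N m k l a b = (real (dg N m b k) / dg N m a k + real (dg N m b l) / dg N m a l) / 2"

lemma mt_sym: "mt m a k j = mt m a j k"
  unfolding mt_def Y_def by (auto simp: min.commute max.commute)

lemma dg_pos: assumes "l \<in> {1..N}" "k \<noteq> l" "mt m a k l" shows "dg N m a k \<ge> 1"
proof -
  have "l \<in> {j \<in> {1..N} - {k}. mt m a k j}" using assms by auto
  moreover have "finite {j \<in> {1..N} - {k}. mt m a k j}" by auto
  ultimately have "card {j \<in> {1..N} - {k}. mt m a k j} > 0" using card_gt_0_iff by blast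
  then show ?thesis unfolding dg_def by simp
qed

lemma mt_fl: assumes "k \<ge> 1" "l \<ge> 1" "k \<noteq> l" "j \<ge> 1" "j \<noteq> k"
  shows "mt m (fl k l a) k j = (if j = l then mt m a k j else \<not> mt m a k j)"
  using assms unfolding mt_def by (auto simp: qubit_fl)

lemma dg_fl: assumes "k \<in> {1..N}" "l \<in> {1..N}" "k \<noteq> l" "mt m a k l"
  shows "dg N m (fl k l a) k = N - dg N m a k"
proof -
  define S where "S = {1..N} - {k}"
  define M where "M = {j \<in> S. mt m a k j}"
  have fS: "finite S" unfolding S_def by auto
  have lM: "l \<in> M" using assms unfolding M_def S_def by auto
  have MS: "M \<subseteq> S" unfolding M_def by auto
  have eq: "{j \<in> S. mt m (fl k l a) k j} = S - (M - {l})"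
    using assms unfolding M_def S_def by (auto simp: mt_fl split: if_splits)
  have cS: "card S = N - 1" unfolding S_def using assms by auto
  have "card (S - (M - {l})) = card S - card (M - {l})"
    by (rule card_Diff_subset) (use fS MS finite_subset in auto)
  also have "card (M - {l}) = card M - 1" using lM by simp
  finally have "card (S - (M - {l})) = (N - 1) - (card M - 1)" using cS by simp
  moreover have "finite M" using fS MS finite_subset by blast
  then have "card M \<ge> 1" using lM card_gt_0_iff
    by (metis One_nat_def Suc_leI empty_iff)
  moreover have "card M \<le> N - 1" using cS MS fS card_mono by metis
  ultimately have "card {j \<in> S. mt m (fl k l a) k j} = N - card M" unfolding eq by arith
  then show ?thesis unfolding dg_def S_def M_def .
qed

lemma mt_fl2: assumes "k \<ge> 1" "l \<ge> 1" "k \<noteq> l" "mt m a k l" shows "mt m (fl k l a) k l"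
  using mt_fl[OF assms(1-3), of l] assms by simp
lemma amp_nz: "bell_amp x y u v \<noteq> 0 \<Longrightarrow> v = (u \<noteq> y)"
  unfolding bell_amp_def by (auto split: if_splits)

lemma amp_le: "cmod (bell_amp x y u v) \<le> 1 / sqrt 2"
  unfolding bell_amp_def by (auto simp: norm_divide)

lemma entry_le: "cmod (bell_proj_entry N k l xy a b) \<le> 1/2"
proof -
  have "cmod (bell_amp (fst xy) (snd xy) (qubit a k) (qubit a l) * cnj (bell_amp (fst xy) (snd xy) (qubit b k) (qubit b l)))
     \<le> (1 / sqrt 2) * (1 / sqrt 2)" unfolding norm_mult complex_mod_cnj
    by (rule mult_mono) (auto simp: amp_le)
  also have "\<dots> = 1/2" by (simp add: divide_simps)
  finally show ?thesis unfolding bell_proj_entry_def by auto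
qed

lemma entry_Q: assumes kl: "(k, l) \<in> enc_set N" and ab: "a < 2^N" "b < 2^N"
  shows "cmod (bell_proj_entry N k l (m (k, l)) a b) \<le> Q m k l a b"
proof (cases "bell_proj_entry N k l (m (k, l)) a b = 0")
  case True then show ?thesis unfolding Q_def by auto
next
  case False
  have k: "k \<in> {1..N}" "l \<in> {1..N}" "k < l" using kl unfolding enc_set_def by auto
  have Ykl: "Y m k l = snd (m (k, l))" using k unfolding Y_def by auto
  from False have agree: "\<forall>j \<in> {1..N} - {k, l}. qubit a j = qubit b j"
    and nz: "bell_amp (fst (m (k, l))) (snd (m (k, l))) (qubit a k) (qubit a l) \<noteq> 0"
            "bell_amp (fst (m (k, l))) (snd (m (k, l))) (qubit b k) (qubit b l) \<noteq> 0"
    unfolding bell_proj_entry_def by (auto split: if_splits)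
  have ma: "mt m a k l" and mb: "mt m b k l" using amp_nz[OF nz(1)] amp_nz[OF nz(2)] Ykl
    unfolding mt_def by auto
  have "b = a \<or> b = fl k l a"
  proof (cases "qubit b k = qubit a k")
    case True
    then have "qubit b l = qubit a l" using ma mb unfolding mt_def by auto
    have "\<forall>j\<in>{1..N}. qubit b j = qubit a j"
    proof
      fix j assume j: "j \<in> {1..N}"
      show "qubit b j = qubit a j"
      proof (cases "j = k \<or> j = l")
        case True with \<open>qubit b l = qubit a l\<close> \<open>qubit b k = qubit a k\<close> show ?thesis by blast
      next
        case False with j agree show ?thesis by simp
      qed
    qed
    then have "b = a" using bits_eq[OF ab(2,1)] by blast
    then show ?thesis by simp
  next
    case False
    then have "qubit b l \<noteq> qubit a l" using ma mb unfolding mt_def by auto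
    have "\<forall>j\<in>{1..N}. qubit (fl k l a) j = qubit b j"
    proof
      fix j assume j: "j \<in> {1..N}"
      have q: "qubit (fl k l a) j = (if j = k \<or> j = l then \<not> qubit a j else qubit a j)"
        using k j by (intro qubit_fl) auto
      show "qubit (fl k l a) j = qubit b j"
      proof (cases "j = k \<or> j = l")
        case True with \<open>qubit b l \<noteq> qubit a l\<close> \<open>qubit b k \<noteq> qubit a k\<close> q show ?thesis by auto
      next
        case False with j agree q show ?thesis by simp
      qed
    qed
    then have "fl k l a = b" using bits_eq[OF fl_lt[OF ab(1) k(1,2)] ab(2)] by blast
    then show ?thesis by simp
  qed
  then show ?thesis using ma entry_le unfolding Q_def by auto
qed
lemma amgm: fixes r r' x y :: real assumes "r > 0" "r' > 0" "r * r' \<ge> 1"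
  shows "2 * x * y \<le> r * x^2 + r' * y^2"
proof -
  have "0 \<le> r * (x - y / r)^2" using assms by simp
  also have "\<dots> = r * x^2 - 2 * x * y + y^2 / r" using assms
    by (simp add: power2_eq_square field_simps)
  finally have 1: "2 * x * y \<le> r * x^2 + y^2 / r" by simp
  have "1 / r \<le> r'" using assms by (simp add: divide_simps mult.commute)
  then have "y^2 / r \<le> r' * y^2"
    by (metis divide_inverse inverse_eq_divide mult.commute mult_right_mono zero_le_power2)
  then show ?thesis using 1 by simp
qed

lemma ratio_prod: fixes p q r s :: real assumes "p > 0" "q > 0" "r > 0" "s > 0"
  shows "((p/q + r/s)/2) * ((q/p + s/r)/2) \<ge> 1"
proof -
  define t where "t = (p*s)/(q*r)"
  have t: "t > 0" using assms unfolding t_def by simp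
  have "((p/q + r/s)/2) * ((q/p + s/r)/2) = (2 + t + 1/t)/4"
    using assms unfolding t_def by (simp add: field_simps)
  moreover have "t + 1/t \<ge> 2"
  proof -
    have "0 \<le> (t - 1)^2 / t" using t by simp
    also have "\<dots> = t + 1/t - 2" using t by (simp add: power2_eq_square field_simps)
    finally show ?thesis by simp
  qed
  ultimately show ?thesis by simp
qed

lemma schur: fixes Qf Rf :: "nat \<Rightarrow> nat \<Rightarrow> real" and x :: "nat \<Rightarrow> real"
  assumes fin: "finite S" and sym: "\<And>a b. a \<in> S \<Longrightarrow> b \<in> S \<Longrightarrow> Qf a b = Qf b a"
    and nn: "\<And>a b. a \<in> S \<Longrightarrow> b \<in> S \<Longrightarrow> Qf a b \<ge> 0"
    and rr: "\<And>a b. a \<in> S \<Longrightarrow> b \<in> S \<Longrightarrow> Qf a b \<noteq> 0 \<Longrightarrow> Rf a b > 0 \<and> Rf b a > 0 \<and> Rf a b * Rf b a \<ge> 1"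
  shows "(\<Sum>a\<in>S. \<Sum>b\<in>S. Qf a b * (x a * x b)) \<le> (\<Sum>a\<in>S. x a ^ 2 * (\<Sum>b\<in>S. Qf a b * Rf a b))"
proof -
  have "(\<Sum>a\<in>S. \<Sum>b\<in>S. Qf a b * (x a * x b)) \<le>
        (\<Sum>a\<in>S. \<Sum>b\<in>S. Qf a b * ((Rf a b * x a ^ 2 + Rf b a * x b ^ 2) / 2))"
  proof (intro sum_mono)
    fix a b assume ab: "a \<in> S" "b \<in> S"
    show "Qf a b * (x a * x b) \<le> Qf a b * ((Rf a b * x a ^ 2 + Rf b a * x b ^ 2) / 2)"
    proof (cases "Qf a b = 0")
      case False
      then have "2 * x a * x b \<le> Rf a b * x a ^ 2 + Rf b a * x b ^ 2"
        using rr[OF ab] by (intro amgm) auto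
      then show ?thesis using nn[OF ab] by (intro mult_left_mono) auto
    qed simp
  qed
  also have "\<dots> = (\<Sum>a\<in>S. \<Sum>b\<in>S. Qf a b * Rf a b * x a ^ 2 / 2 + Qf a b * Rf b a * x b ^ 2 / 2)"
    by (intro sum.cong refl) (simp add: distrib_left add_divide_distrib)
  also have "\<dots> = (\<Sum>a\<in>S. \<Sum>b\<in>S. Qf a b * Rf a b * x a ^ 2 / 2) + (\<Sum>a\<in>S. \<Sum>b\<in>S. Qf a b * Rf b a * x b ^ 2 / 2)"
    by (simp only: sum.distrib)
  also have "(\<Sum>a\<in>S. \<Sum>b\<in>S. Qf a b * Rf b a * x b ^ 2 / 2) = (\<Sum>b\<in>S. \<Sum>a\<in>S. Qf b a * Rf b a * x b ^ 2 / 2)"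
    by (subst sum.swap) (intro sum.cong refl, simp add: sym)
  also have "(\<Sum>a\<in>S. \<Sum>b\<in>S. Qf a b * Rf a b * x a ^ 2 / 2) + (\<Sum>b\<in>S. \<Sum>a\<in>S. Qf b a * Rf b a * x b ^ 2 / 2)
      = (\<Sum>a\<in>S. \<Sum>b\<in>S. Qf a b * Rf a b * x a ^ 2)" 
    by (simp add: sum.distrib[symmetric] mult.assoc)
  also have "\<dots> = (\<Sum>a\<in>S. x a ^ 2 * (\<Sum>b\<in>S. Qf a b * Rf a b))"
    by (simp add: sum_distrib_left mult.commute mult.left_commute)
  finally show ?thesis .
qed
lemma fl_comm: "fl k l a = fl l k a"
  unfolding fl_def by (rule bit_eqI) (auto simp: bit_flip_bit_iff)

lemma dg_le: "dg N m a k \<le> N"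
proof -
  have "dg N m a k \<le> card {1..N}" unfolding dg_def by (rule card_mono) auto
  then show ?thesis by simp
qed

lemma double_count: fixes F :: "nat \<Rightarrow> nat \<Rightarrow> real"
  shows "(\<Sum>p\<in>enc_set N. F (fst p) (snd p) + F (snd p) (fst p)) = (\<Sum>k\<in>{1..N}. \<Sum>j\<in>{1..N} - {k}. F k j)"
proof -
  have fE: "finite (enc_set N)"
    by (rule finite_subset[of _ "{1..N} \<times> {1..N}"]) (auto simp: enc_set_def)
  have D: "Sigma {1..N} (\<lambda>k. {1..N} - {k}) = enc_set N \<union> prod.swap ` enc_set N"
    unfolding enc_set_def by (auto simp: image_iff)
  have disj: "enc_set N \<inter> prod.swap ` enc_set N = {}" unfolding enc_set_def by auto
  have "(\<Sum>k\<in>{1..N}. \<Sum>j\<in>{1..N} - {k}. F k j) = (\<Sum>p\<in>Sigma {1..N} (\<lambda>k. {1..N} - {k}). F (fst p) (snd p))"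
    by (subst sum.Sigma) (auto simp: split_beta)
  also have "\<dots> = (\<Sum>p\<in>enc_set N. F (fst p) (snd p)) + (\<Sum>p\<in>prod.swap ` enc_set N. F (fst p) (snd p))"
    unfolding D by (rule sum.union_disjoint) (use fE disj in auto)
  also have "(\<Sum>p\<in>prod.swap ` enc_set N. F (fst p) (snd p)) = (\<Sum>p\<in>enc_set N. F (snd p) (fst p))"
    by (subst sum.reindex) (auto simp: inj_on_def)
  finally show ?thesis by (simp add: sum.distrib)
qed

lemma star_sum: fixes a :: nat
  shows "(\<Sum>j\<in>{1..N} - {k}. (if mt m a k j then 1 / real (dg N m a k) else 0)) \<le> 1"
proof -
  have "(\<Sum>j\<in>{1..N} - {k}. (if mt m a k j then 1 / real (dg N m a k) else 0))
      = (\<Sum>j\<in>{j \<in> {1..N} - {k}. mt m a k j}. 1 / real (dg N m a k))"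
    by (subst sum.inter_filter) auto
  also have "\<dots> = real (dg N m a k) * (1 / real (dg N m a k))" unfolding dg_def by simp
  also have "\<dots> \<le> 1" by (cases "dg N m a k = 0") auto
  finally show ?thesis .
qed

lemma row_sum: assumes kl: "(k, l) \<in> enc_set N" and a: "a < 2^N"
  shows "(\<Sum>b\<in>{0..<2^N}. Q m k l a b * R N m k l a b) =
     (if mt m a k l then real N / 4 * (1 / real (dg N m a k) + 1 / real (dg N m a l)) else 0)"
proof (cases "mt m a k l")
  case False then show ?thesis unfolding Q_def by simp
next
  case True
  have k: "k \<in> {1..N}" "l \<in> {1..N}" "k \<noteq> l" using kl unfolding enc_set_def by auto
  have neq: "fl k l a \<noteq> a" using k by (intro fl_neq) auto
  have flt: "fl k l a \<in> {0..<2^N}" using fl_lt[OF a k(1,2)] by simp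
  have Qe: "\<And>b. Q m k l a b = (if b = a then 1/2 else 0) + (if b = fl k l a then 1/2 else 0)"
    using True neq unfolding Q_def by auto
  have "(\<Sum>b\<in>{0..<2^N}. Q m k l a b * R N m k l a b) =
      (\<Sum>b\<in>{0..<2^N}. (if b = a then R N m k l a b / 2 else 0)) + (\<Sum>b\<in>{0..<2^N}. (if b = fl k l a then R N m k l a b / 2 else 0))"
    unfolding sum.distrib[symmetric] by (intro sum.cong refl) (simp add: Qe)
  also have "\<dots> = R N m k l a a / 2 + R N m k l a (fl k l a) / 2"
    using a flt by (simp add: sum.delta)
  finally have S: "(\<Sum>b\<in>{0..<2^N}. Q m k l a b * R N m k l a b) = R N m k l a a / 2 + R N m k l a (fl k l a) / 2" .
  have mlk: "mt m a l k" using True mt_sym by metis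
  have dk: "dg N m a k \<ge> 1" using dg_pos[OF k(2,3) True] .
  have dl: "dg N m a l \<ge> 1" using dg_pos[OF k(1) _ mlk] k(3) by auto
  have fk: "dg N m (fl k l a) k = N - dg N m a k" using dg_fl[OF k True] .
  have fl': "dg N m (fl k l a) l = N - dg N m a l" using dg_fl[OF k(2,1) _ mlk] k(3) fl_comm by metis
  have Raa: "R N m k l a a = 1" using dk dl unfolding R_def by simp
  have Rafl: "R N m k l a (fl k l a) = ((real N - dg N m a k) / dg N m a k + (real N - dg N m a l) / dg N m a l) / 2"
    unfolding R_def fk fl' using dg_le[of N m a k] dg_le[of N m a l] by (simp add: of_nat_diff)
  show ?thesis unfolding S Raa Rafl using True dk dl by (simp add: field_simps)
qed
lemma per_a: assumes a: "a < 2^N"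
  shows "(\<Sum>(k, l)\<in>enc_set N. \<Sum>b\<in>{0..<2^N}. Q m k l a b * R N m k l a b) \<le> real N ^ 2 / 4"
proof -
  define F where "F k j = (if mt m a k j then 1 / real (dg N m a k) else 0)" for k j
  have "(\<Sum>(k, l)\<in>enc_set N. \<Sum>b\<in>{0..<2^N}. Q m k l a b * R N m k l a b)
      = (\<Sum>p\<in>enc_set N. real N / 4 * (F (fst p) (snd p) + F (snd p) (fst p)))"
  proof (intro sum.cong refl)
    fix p assume p: "p \<in> enc_set N"
    obtain k l where kl: "p = (k, l)" by force
    show "(case p of (k, l) \<Rightarrow> \<Sum>b\<in>{0..<2^N}. Q m k l a b * R N m k l a b) = real N / 4 * (F (fst p) (snd p) + F (snd p) (fst p))"
      unfolding kl using row_sum[OF p[unfolded kl] a] mt_sym[of m a k l] unfolding F_def by auto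
  qed
  also have "\<dots> = real N / 4 * (\<Sum>p\<in>enc_set N. F (fst p) (snd p) + F (snd p) (fst p))"
    by (rule sum_distrib_left[symmetric])
  also have "\<dots> = real N / 4 * (\<Sum>k\<in>{1..N}. \<Sum>j\<in>{1..N} - {k}. F k j)"
    by (simp only: double_count)
  also have "\<dots> \<le> real N / 4 * (\<Sum>k\<in>{1..N}. 1)"
  proof (intro mult_left_mono sum_mono)
    fix k show "(\<Sum>j\<in>{1..N} - {k}. F k j) \<le> 1" unfolding F_def by (rule star_sum)
  qed simp
  also have "\<dots> = real N ^ 2 / 4" by (simp add: power2_eq_square)
  finally show ?thesis .
qed

lemma Q_sym: assumes "k \<ge> 1" "l \<ge> 1" "k \<noteq> l" shows "Q m k l a b = Q m k l b a"
proof -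
  have "mt m a k l \<and> b = fl k l a \<longleftrightarrow> mt m b k l \<and> a = fl k l b"
    using mt_fl2[OF assms] fl_fl[OF assms(3)] by metis
  then show ?thesis unfolding Q_def by auto
qed

lemma Q_R: assumes kl: "(k, l) \<in> enc_set N" and Qn: "Q m k l a b \<noteq> 0"
  shows "R N m k l a b > 0 \<and> R N m k l b a > 0 \<and> R N m k l a b * R N m k l b a \<ge> 1"
proof -
  have k: "k \<in> {1..N}" "l \<in> {1..N}" "k \<noteq> l" using kl unfolding enc_set_def by auto
  have ma: "mt m a k l" and b: "b = a \<or> b = fl k l a" using Qn unfolding Q_def by (auto split: if_splits)
  have mb: "mt m b k l" using b ma mt_fl2[of k l m a] k by auto
  have d: "dg N m c k \<ge> 1 \<and> dg N m c l \<ge> 1" if "mt m c k l" for c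
  proof -
    have "mt m c l k" using that mt_sym by metis
    then show ?thesis using dg_pos[OF k(2,3) that] dg_pos[OF k(1) _ \<open>mt m c l k\<close>] k(3) by auto
  qed
  have da: "dg N m a k \<ge> 1" "dg N m a l \<ge> 1" using d[OF ma] by auto
  have db: "dg N m b k \<ge> 1" "dg N m b l \<ge> 1" using d[OF mb] by auto
  have "R N m k l a b * R N m k l b a \<ge> 1" unfolding R_def
    by (rule ratio_prod) (use da db in auto)
  moreover have "R N m k l a b > 0" "R N m k l b a > 0" unfolding R_def using da db
    by (intro divide_pos_pos add_pos_pos; simp)+
  ultimately show ?thesis by auto
qed
theorem lemma3:
  fixes N :: nat and m :: "nat \<times> nat \<Rightarrow> bool \<times> bool"
  assumes "N \<ge> 2"
  shows "lambda_max (sigma_m N m) \<le> real N ^ 2 / 4 + real N / 4 - 1 / 2"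
proof -
  define n where "n = (2::nat)^N"
  define A where "A = sigma_m N m"
  define E where "E = enc_set N"
  define S where "S = {0..<n}"
  define P where "P k l i j = bell_proj_entry N k l (m (k, l)) i j" for k l i j
  have A: "A \<in> carrier_mat n n" unfolding A_def sigma_m_def n_def by auto
  have Aij: "A $$ (i, j) = (\<Sum>(k, l)\<in>E. P k l i j)" if "i < n" "j < n" for i j
    using that unfolding A_def sigma_m_def n_def E_def P_def by simp
  have fE: "finite E" unfolding E_def
    by (rule finite_subset[of _ "{1..N} \<times> {1..N}"]) (auto simp: enc_set_def)
  have ev_bound: "Re ev \<le> real N ^ 2 / 4" if evA: "eigenvalue A ev" for ev
  proof -
    have dA: "dim_row A = n" using A by auto
    obtain v where "eigenvector A v ev" using evA by (auto simp: eigenvalue_def)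
    then have v: "v \<in> carrier_vec n" "v \<noteq> 0\<^sub>v n" "A *\<^sub>v v = ev \<cdot>\<^sub>v v"
      unfolding eigenvector_def dA by auto
    define x where "x i = cmod (v $ i)" for i
    have Av: "(A *\<^sub>v v) $ i = (\<Sum>j\<in>S. A $$ (i, j) * v $ j)" if "i < n" for i
      using that A v(1) unfolding S_def by (auto simp: scalar_prod_def)
    have "(\<Sum>i\<in>S. cnj (v $ i) * (A *\<^sub>v v) $ i) = (\<Sum>i\<in>S. ev * complex_of_real (x i ^ 2))"
    proof (intro sum.cong refl)
      fix i assume "i \<in> S"
      then have "(A *\<^sub>v v) $ i = ev * v $ i" using v(1,3) A unfolding S_def
        by (metis atLeastLessThan_iff carrier_vecD index_smult_vec(1))
      moreover have "v $ i * cnj (v $ i) = complex_of_real (x i ^ 2)"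
        unfolding x_def by (metis complex_norm_square of_real_power)
      ultimately show "cnj (v $ i) * (A *\<^sub>v v) $ i = ev * complex_of_real (x i ^ 2)"
        by (simp add: algebra_simps)
    qed
    also have "\<dots> = ev * complex_of_real (\<Sum>i\<in>S. x i ^ 2)" by (simp add: sum_distrib_left)
    finally have lhs: "(\<Sum>i\<in>S. cnj (v $ i) * (A *\<^sub>v v) $ i) = ev * complex_of_real (\<Sum>i\<in>S. x i ^ 2)" .
    have "(\<Sum>i\<in>S. cnj (v $ i) * (A *\<^sub>v v) $ i) = (\<Sum>i\<in>S. \<Sum>j\<in>S. \<Sum>p\<in>E. cnj (v $ i) * P (fst p) (snd p) i j * v $ j)"
    proof (intro sum.cong refl)
      fix i assume i: "i \<in> S"
      have "cnj (v $ i) * (A *\<^sub>v v) $ i = (\<Sum>j\<in>S. cnj (v $ i) * (A $$ (i, j) * v $ j))"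
        using i unfolding Av[of i, OF i[unfolded S_def, simplified]] by (simp add: sum_distrib_left S_def)
      also have "\<dots> = (\<Sum>j\<in>S. \<Sum>p\<in>E. cnj (v $ i) * P (fst p) (snd p) i j * v $ j)"
      proof (intro sum.cong refl)
        fix j assume j: "j \<in> S"
        show "cnj (v $ i) * (A $$ (i, j) * v $ j) = (\<Sum>p\<in>E. cnj (v $ i) * P (fst p) (snd p) i j * v $ j)"
          using i j unfolding S_def by (simp add: Aij split_beta sum_distrib_left sum_distrib_right mult.assoc)
      qed
      finally show "cnj (v $ i) * (A *\<^sub>v v) $ i = (\<Sum>j\<in>S. \<Sum>p\<in>E. cnj (v $ i) * P (fst p) (snd p) i j * v $ j)" .
    qed
    also have "\<dots> = (\<Sum>i\<in>S. \<Sum>p\<in>E. \<Sum>j\<in>S. cnj (v $ i) * P (fst p) (snd p) i j * v $ j)"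
      by (rule sum.cong[OF refl]) (rule sum.swap)
    also have "\<dots> = (\<Sum>p\<in>E. \<Sum>i\<in>S. \<Sum>j\<in>S. cnj (v $ i) * P (fst p) (snd p) i j * v $ j)"
      by (rule sum.swap)
    finally have rhs: "(\<Sum>i\<in>S. cnj (v $ i) * (A *\<^sub>v v) $ i) = (\<Sum>p\<in>E. \<Sum>i\<in>S. \<Sum>j\<in>S. cnj (v $ i) * P (fst p) (snd p) i j * v $ j)" .
    have "Re ev * (\<Sum>i\<in>S. x i ^ 2) = Re (\<Sum>p\<in>E. \<Sum>i\<in>S. \<Sum>j\<in>S. cnj (v $ i) * P (fst p) (snd p) i j * v $ j)"
    proof -
      have "Re (ev * complex_of_real (\<Sum>i\<in>S. x i ^ 2)) = Re ev * (\<Sum>i\<in>S. x i ^ 2)" by simp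
      then show ?thesis using lhs rhs by simp
    qed
    also have "\<dots> = (\<Sum>p\<in>E. \<Sum>i\<in>S. \<Sum>j\<in>S. Re (cnj (v $ i) * P (fst p) (snd p) i j * v $ j))"
      by (simp add: Re_sum)
    also have "\<dots> \<le> (\<Sum>p\<in>E. \<Sum>i\<in>S. \<Sum>j\<in>S. Q m (fst p) (snd p) i j * (x i * x j))"
    proof (intro sum_mono)
      fix p i j assume p: "p \<in> E" and i: "i \<in> S" and j: "j \<in> S"
      have "Re (cnj (v $ i) * P (fst p) (snd p) i j * v $ j) \<le> cmod (cnj (v $ i) * P (fst p) (snd p) i j * v $ j)"
        by (rule complex_Re_le_cmod)
      also have "\<dots> = cmod (P (fst p) (snd p) i j) * (x i * x j)"
        unfolding x_def by (simp add: norm_mult)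
      also have "\<dots> \<le> Q m (fst p) (snd p) i j * (x i * x j)"
        by (rule mult_right_mono) (use entry_Q[of "fst p" "snd p" N i j m] p i j in
             \<open>auto simp: E_def S_def n_def P_def x_def\<close>)
      finally show "Re (cnj (v $ i) * P (fst p) (snd p) i j * v $ j) \<le> Q m (fst p) (snd p) i j * (x i * x j)" .
    qed
    also have "\<dots> \<le> (\<Sum>p\<in>E. \<Sum>i\<in>S. x i ^ 2 * (\<Sum>j\<in>S. Q m (fst p) (snd p) i j * R N m (fst p) (snd p) i j))"
    proof (rule sum_mono)
      fix p assume p: "p \<in> E"
      obtain k l where kl: "p = (k, l)" by force
      have k: "k \<in> {1..N}" "l \<in> {1..N}" "k \<noteq> l" using p kl unfolding E_def enc_set_def by auto
      show "(\<Sum>i\<in>S. \<Sum>j\<in>S. Q m (fst p) (snd p) i j * (x i * x j))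
          \<le> (\<Sum>i\<in>S. x i ^ 2 * (\<Sum>j\<in>S. Q m (fst p) (snd p) i j * R N m (fst p) (snd p) i j))"
        unfolding kl fst_conv snd_conv
      proof (rule schur)
        show "finite S" unfolding S_def by simp
        show "Q m k l a b = Q m k l b a" for a b using Q_sym[of k l m a b] k by auto
        show "Q m k l a b \<ge> 0" for a b unfolding Q_def by auto
        show "R N m k l a b > 0 \<and> R N m k l b a > 0 \<and> R N m k l a b * R N m k l b a \<ge> 1"
          if "Q m k l a b \<noteq> 0" for a b using Q_R[of k l N m a b] p kl that unfolding E_def by auto
      qed
    qed
    also have "\<dots> = (\<Sum>i\<in>S. \<Sum>p\<in>E. x i ^ 2 * (\<Sum>j\<in>S. Q m (fst p) (snd p) i j * R N m (fst p) (snd p) i j))"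
      by (rule sum.swap)
    also have "\<dots> = (\<Sum>i\<in>S. x i ^ 2 * (\<Sum>(k, l)\<in>E. \<Sum>j\<in>S. Q m k l i j * R N m k l i j))"
      by (simp add: sum_distrib_left case_prod_beta)
    also have "\<dots> \<le> (\<Sum>i\<in>S. x i ^ 2 * (real N ^ 2 / 4))"
      by (intro sum_mono mult_left_mono) (use per_a in \<open>auto simp: S_def n_def E_def\<close>)
    also have "\<dots> = (\<Sum>i\<in>S. x i ^ 2) * (real N ^ 2 / 4)" by (simp add: sum_distrib_right)
    finally have ineq: "Re ev * (\<Sum>i\<in>S. x i ^ 2) \<le> (\<Sum>i\<in>S. x i ^ 2) * (real N ^ 2 / 4)" .
    obtain i where i: "i < n" "v $ i \<noteq> 0"
      using v(1,2) by (metis carrier_vecD eq_vecI index_zero_vec(1,2))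
    have "0 < x i ^ 2" using i unfolding x_def by simp
    also have "\<dots> \<le> (\<Sum>i\<in>S. x i ^ 2)"
      by (rule member_le_sum) (use i in \<open>auto simp: S_def\<close>)
    finally have pos: "0 < (\<Sum>i\<in>S. x i ^ 2)" .
    show ?thesis using ineq pos by (simp add: mult.commute)
  qed
  have sp: "{ev. eigenvalue A ev} = spectrum A" unfolding spectrum_def by simp
  have fin: "finite (Re ` {ev. eigenvalue A ev})" unfolding sp using card_finite_spectrum(1)[OF A] by simp
  have ne: "Re ` {ev. eigenvalue A ev} \<noteq> {}" unfolding sp using spectrum_non_empty[OF A] n_def by simp
  have "lambda_max A \<le> real N ^ 2 / 4"
    unfolding lambda_max_def by (subst Max_le_iff[OF fin ne]) (use ev_bound in blast)
  moreover have "real N ^ 2 / 4 \<le> real N ^ 2 / 4 + real N / 4 - 1 / 2" using assms by simp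
  ultimately show ?thesis unfolding A_def by linarith
qed
end
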